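(* Let $(G,S)$ and $(H,S)$ be two compatible $d$-labeled boundaried graphs such that $\mathbf{Aux}(G,S)\oplus\mathbf{Aux}(H,S)$ has no cycles. If $F$ is an $S$-block of $(G,S)\oplus(H,S)$, then $\mathbf{Aux}(F\cap G,S\cap V(F))\oplus\mathbf{Aux}(F\cap H,S\cap V(F))$ has no cycles.
   Context: A block of a graph is a maximal connected subgraph without a cut vertex. A block $d$-labeling of a graph whose blocks have at most $d$ vertices is a map $V(G)\to[d]$ injective on each block; a $d$-labeled boundaried graph is a pair $(G,S)$ with $S\subseteq V(G)$ and $G$ carrying such a labeling. $(G,S)$ and $(H,S)$ are compatible if $V(G-S)\cap V(H-S)=\emptyset$, $G[S]=H[S]$, and labels agree on $S$. The sum $(G,S)\oplus(H,S)$ is the graph obtained from the disjoint union of $G$ and $H$ by identifying corresponding vertices of $S$ and removing duplicate edges inside $S$. An $S$-block of a graph containing $S$ is a block of it containing an edge of $G[S]$. For graphs $G_1,G_2$, $G_1\cap G_2$ is the graph with vertex set $V(G_1)\cap V(G_2)$ and edge set $E(G_1)\cap E(G_2)$. For a boundaried graph $(G,S)$, $\mathbf{Aux}(G,S)$ is the bipartite graph whose vertices are the connected components of $G$ and the connected components of $G[S]$, a component $C_1$ of $G$ adjacent to a component $C_2$ of $G[S]$ iff $C_2\subseteq C_1$; for two boundaried graphs with the same boundary graph, $\mathbf{Aux}(G,S)\oplus\mathbf{Aux}(H,S)$ is the disjoint union of $\mathbf{Aux}(G,S)$ and $\mathbf{Aux}(H,S)$ with the vertices corresponding to the same component of the boundary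 graph identified. *)

theory Defs
  imports Main
begin

type_synonym 'a graph = "'a set \<times> 'a set set"

definition verts :: "'a graph \<Rightarrow> 'a set" where "verts G = fst G"
definition edges :: "'a graph \<Rightarrow> 'a set set" where "edges G = snd G"

definition wf_graph :: "'a graph \<Rightarrow> bool" where
  "wf_graph G \<longleftrightarrow> finite (verts G) \<and>
     (\<forall>e\<in>edges G. \<exists>u v. e = {u, v} \<and> u \<noteq> v \<and> u \<in> verts G \<and> v \<in> verts G)"

definition adj :: "'a graph \<Rightarrow> 'a \<Rightarrow> 'a \<Rightarrow> bool" where
  "adj G u v \<longleftrightarrow> {u, v} \<in> edges G"

definition subgraph :: "'a graph \<Rightarrow> 'a graph \<Rightarrow> bool" where
  "subgraph H G \<longleftrightarrow> wf_graph H \<and> verts H \<subseteq> verts G \<and> edges H \<subseteq> edges G"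

definition induced :: "'a graph \<Rightarrow> 'a set \<Rightarrow> 'a graph" where
  "induced G S = (verts G \<inter> S, {e \<in> edges G. e \<subseteq> S})"

definition del_vert :: "'a graph \<Rightarrow> 'a \<Rightarrow> 'a graph" where
  "del_vert G v = (verts G - {v}, {e \<in> edges G. v \<notin> e})"

definition del_verts :: "'a graph \<Rightarrow> 'a set \<Rightarrow> 'a graph" where
  "del_verts G S = (verts G - S, {e \<in> edges G. e \<inter> S = {}})"

definition conn_comp :: "'a graph \<Rightarrow> 'a \<Rightarrow> 'a set" where
  "conn_comp G v = {u \<in> verts G. (adj G)\<^sup>*\<^sup>* v u}"

definition comps :: "'a graph \<Rightarrow> 'a set set" where
  "comps G = conn_comp G ` verts G"

definition connected_graph :: "'a graph \<Rightarrow> bool" where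
  "connected_graph G \<longleftrightarrow> verts G \<noteq> {} \<and> (\<forall>u\<in>verts G. \<forall>v\<in>verts G. (adj G)\<^sup>*\<^sup>* u v)"

definition cut_vertex :: "'a graph \<Rightarrow> 'a \<Rightarrow> bool" where
  "cut_vertex G v \<longleftrightarrow> v \<in> verts G \<and> card (comps (del_vert G v)) > card (comps G)"

definition biconn_piece :: "'a graph \<Rightarrow> bool" where
  "biconn_piece B \<longleftrightarrow> connected_graph B \<and> (\<forall>v. \<not> cut_vertex B v)"

definition is_block :: "'a graph \<Rightarrow> 'a graph \<Rightarrow> bool" where
  "is_block G B \<longleftrightarrow> subgraph B G \<and> biconn_piece B \<and>
     (\<forall>B'. subgraph B' G \<and> biconn_piece B' \<and> subgraph B B' \<longrightarrow> B' = B)"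

definition block_labeling :: "nat \<Rightarrow> 'a graph \<Rightarrow> ('a \<Rightarrow> nat) \<Rightarrow> bool" where
  "block_labeling d G lab \<longleftrightarrow> lab ` verts G \<subseteq> {1..d} \<and>
     (\<forall>B. is_block G B \<longrightarrow> card (verts B) \<le> d \<and> inj_on lab (verts B))"

definition labeled_boundaried :: "nat \<Rightarrow> 'a graph \<Rightarrow> 'a set \<Rightarrow> ('a \<Rightarrow> nat) \<Rightarrow> bool" where
  "labeled_boundaried d G S lab \<longleftrightarrow> wf_graph G \<and> S \<subseteq> verts G \<and> block_labeling d G lab"

definition compatible ::
  "'a graph \<Rightarrow> ('a \<Rightarrow> nat) \<Rightarrow> 'a graph \<Rightarrow> ('a \<Rightarrow> nat) \<Rightarrow> 'a set \<Rightarrow> bool" where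
  "compatible G lg H lh S \<longleftrightarrow>
     verts (del_verts G S) \<inter> verts (del_verts H S) = {} \<and>
     induced G S = induced H S \<and> (\<forall>x\<in>S. lg x = lh x)"

text \<open>Sum of compatible boundaried graphs: vertices of S are shared by name, the other
  vertices are disjoint, so the sum is the union of the graphs.\<close>
definition gsum :: "'a graph \<Rightarrow> 'a graph \<Rightarrow> 'a graph" where
  "gsum G H = (verts G \<union> verts H, edges G \<union> edges H)"

definition ginter :: "'a graph \<Rightarrow> 'a graph \<Rightarrow> 'a graph" where
  "ginter G H = (verts G \<inter> verts H, edges G \<inter> edges H)"

definition S_block :: "'a graph \<Rightarrow> 'a set \<Rightarrow> 'a graph \<Rightarrow> bool" where
  "S_block G S F \<longleftrightarrow> is_block G F \<and> edges F \<inter> edges (induced G S) \<noteq> {}"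

text \<open>Vertices of Aux(G,S) (+) Aux(H,S): components of G, components of H, and the
  (shared) components of the common boundary graph.\<close>
datatype 'a auxv = GComp "'a set" | HComp "'a set" | BComp "'a set"

definition aux_sum :: "'a graph \<Rightarrow> 'a graph \<Rightarrow> 'a set \<Rightarrow> 'a auxv graph" where
  "aux_sum G H S =
    (GComp ` comps G \<union> HComp ` comps H \<union> BComp ` comps (induced G S),
     {{GComp C1, BComp C2} | C1 C2. C1 \<in> comps G \<and> C2 \<in> comps (induced G S) \<and> C2 \<subseteq> C1} \<union>
     {{HComp C1, BComp C2} | C1 C2. C1 \<in> comps H \<and> C2 \<in> comps (induced H S) \<and> C2 \<subseteq> C1})"

definition has_cycle :: "'a graph \<Rightarrow> bool" where
  "has_cycle G \<longleftrightarrow> (\<exists>vs. length vs \<ge> 3 \<and> distinct vs \<and> set vs \<subseteq> verts G \<and>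
     (\<forall>i < length vs. {vs ! i, vs ! ((i + 1) mod length vs)} \<in> edges G))"

end

theory Submission
  imports Defs "HOL-Library.Transitive_Closure_Table"
begin

lemma verts_pair[simp]: "verts (a, b) = a" by (simp add: verts_def)
lemma edges_pair[simp]: "edges (a, b) = b" by (simp add: edges_def)

lemma wf_edge_verts:
  assumes "wf_graph K" "{a, b} \<in> edges K"
  shows "a \<in> verts K \<and> b \<in> verts K"
  using assms unfolding wf_graph_def by (auto simp: doubleton_eq_iff)

lemma adj_sym: "adj A a b = adj A b a"
  by (simp add: adj_def insert_commute)

lemma rtc_sym: "(adj A)\<^sup>*\<^sup>* a b \<Longrightarrow> (adj A)\<^sup>*\<^sup>* b a"
proof (induct rule: rtranclp_induct)
  case base then show ?case by simp
next
  case (step y z)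
  then show ?case using adj_sym[of A y z]
    by (metis converse_rtranclp_into_rtranclp)
qed

lemma rtc_mono:
  assumes "edges A \<subseteq> edges B" "(adj A)\<^sup>*\<^sup>* a b"
  shows "(adj B)\<^sup>*\<^sup>* a b"
proof -
  have "adj A \<le> adj B" using assms(1) by (auto simp: adj_def)
  then show ?thesis using assms(2) rtranclp_mono by blast
qed

lemma back_path:
  "(\<forall>j<i. R (p (Suc j)) (p j)) \<Longrightarrow> R\<^sup>*\<^sup>* (p i) (p 0)"
proof (induct i)
  case 0 then show ?case by simp
next
  case (Suc i)
  then show ?case by (metis converse_rtranclp_into_rtranclp less_Suc_eq)
qed

lemma fwd_path:
  assumes "i \<le> k" "\<forall>j. i \<le> j \<and> j < k \<longrightarrow> R (p j) (p (Suc j))"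
  shows "R\<^sup>*\<^sup>* (p i) (p k)"
  using assms(1)
proof (induct rule: inc_induct)
  case base then show ?case by simp
next
  case (step n)
  then show ?case using assms(2) by (metis converse_rtranclp_into_rtranclp)
qed

lemma hub:
  assumes "T \<subseteq> verts A" "T \<noteq> {}"
    and "\<forall>a\<in>T. \<forall>b\<in>T. (adj A)\<^sup>*\<^sup>* a b"
    and "\<forall>y\<in>verts A. \<exists>t\<in>T. (adj A)\<^sup>*\<^sup>* y t"
  shows "\<forall>a\<in>verts A. \<forall>b\<in>verts A. (adj A)\<^sup>*\<^sup>* a b"
proof (intro ballI)
  fix a b assume "a \<in> verts A" "b \<in> verts A"
  then obtain t1 t2 where "t1 \<in> T" "t2 \<in> T" "(adj A)\<^sup>*\<^sup>* a t1" "(adj A)\<^sup>*\<^sup>* b t2"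
    using assms(4) by blast
  then show "(adj A)\<^sup>*\<^sup>* a b" using assms(3) rtc_sym
    by (meson rtranclp_trans)
qed

lemma all_reach_comps:
  assumes "\<forall>a\<in>verts A. \<forall>b\<in>verts A. (adj A)\<^sup>*\<^sup>* a b"
  shows "comps A \<subseteq> {verts A}"
proof
  fix C assume "C \<in> comps A"
  then obtain v where v: "v \<in> verts A" "C = conn_comp A v" by (auto simp: comps_def)
  have "conn_comp A v = verts A"
  proof
    show "conn_comp A v \<subseteq> verts A" by (auto simp: conn_comp_def)
    show "verts A \<subseteq> conn_comp A v" using assms v(1) by (auto simp: conn_comp_def)
  qed
  then show "C \<in> {verts A}" using v by simp
qed

lemma connected_comps:
  assumes "connected_graph A"
  shows "comps A = {verts A}"
proof -
  have "comps A \<subseteq> {verts A}" using assms by (intro all_reach_comps) (simp add: connected_graph_def)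
  moreover have "comps A \<noteq> {}" using assms by (simp add: connected_graph_def comps_def)
  ultimately show ?thesis by blast
qed

lemma del_conn:
  assumes "biconn_piece F" "wf_graph F" "a \<in> verts F - {x}" "b \<in> verts F - {x}"
  shows "(adj (del_vert F x))\<^sup>*\<^sup>* a b"
proof (cases "x \<in> verts F")
  case False
  have eFD: "edges F \<subseteq> edges (del_vert F x)"
  proof
    fix e assume "e \<in> edges F"
    then obtain u v where "e = {u,v}" "u \<in> verts F" "v \<in> verts F"
      using assms(2) unfolding wf_graph_def by blast
    then show "e \<in> edges (del_vert F x)" using False \<open>e \<in> edges F\<close>
      by (auto simp: del_vert_def)
  qed
  have "(adj F)\<^sup>*\<^sup>* a b" using assms(1,3,4)
    by (auto simp: biconn_piece_def connected_graph_def)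
  then show ?thesis by (rule rtc_mono[OF eFD])
next
  case True
  let ?D = "del_vert F x"
  have "\<not> cut_vertex F x" using assms(1) by (simp add: biconn_piece_def)
  moreover have "comps F = {verts F}"
    using assms(1) by (intro connected_comps) (simp add: biconn_piece_def)
  ultimately have c: "card (comps ?D) \<le> 1" using True by (simp add: cut_vertex_def)
  have vD: "verts ?D = verts F - {x}" by (simp add: del_vert_def)
  have fin: "finite (comps ?D)"
    using assms(2) vD by (simp add: comps_def wf_graph_def)
  have "conn_comp ?D a \<in> comps ?D" "conn_comp ?D b \<in> comps ?D"
    using assms(3,4) vD by (auto simp: comps_def)
  then have "conn_comp ?D a = conn_comp ?D b"
  proof -
    have "\<forall>a\<in>comps ?D. \<forall>b\<in>comps ?D. a = b" using c card_le_Suc0_iff_eq[OF fin] by simp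
    then show ?thesis using \<open>conn_comp ?D a \<in> comps ?D\<close> \<open>conn_comp ?D b \<in> comps ?D\<close> by blast
  qed
  moreover have "b \<in> conn_comp ?D b" using assms(4) vD by (simp add: conn_comp_def)
  ultimately show ?thesis unfolding conn_comp_def by blast
qed

lemma core:
  assumes wfK: "wf_graph K" and blk: "is_block K F"
    and inj: "inj_on p {0..k}" and k: "0 < k"
    and pu: "p 0 \<in> verts F" and pv: "p k \<in> verts F"
    and ed: "\<forall>i<k. {p i, p (Suc i)} \<in> edges K"
  shows "\<forall>i<k. {p i, p (Suc i)} \<in> edges F"
proof -
  define PE where "PE = {{p i, p (Suc i)} | i. i < k}"
  define F' where "F' = (verts F \<union> p ` {0..k}, edges F \<union> PE)"
  have vF': "verts F' = verts F \<union> p ` {0..k}" by (simp add: F'_def)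
  have eF': "edges F' = edges F \<union> PE" by (simp add: F'_def)
  have sub: "subgraph F K" and bp: "biconn_piece F"
    and mx: "\<And>B'. subgraph B' K \<Longrightarrow> biconn_piece B' \<Longrightarrow> subgraph F B' \<Longrightarrow> B' = F"
    using blk by (auto simp: is_block_def)
  have wfF: "wf_graph F" using sub by (simp add: subgraph_def)
  have pne: "\<And>i. i < k \<Longrightarrow> p i \<noteq> p (Suc i)"
  proof
    fix i assume "i < k" "p i = p (Suc i)"
    then have "i = Suc i" by (intro inj_onD[OF inj]) auto
    then show False by simp
  qed
  have pK: "\<And>i. i \<le> k \<Longrightarrow> p i \<in> verts K"
  proof -
    fix i assume "i \<le> k"
    show "p i \<in> verts K"
    proof (cases "i < k")
      case True
      then have "{p i, p (Suc i)} \<in> edges K" using ed by simp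
      then show ?thesis by (rule conjunct1[OF wf_edge_verts[OF wfK]])
    next
      case False
      then have "i = Suc (k - 1)" using \<open>i \<le> k\<close> k by simp
      moreover have "k - 1 < k" using k by simp
      then have "{p (k - 1), p (Suc (k - 1))} \<in> edges K" using ed by blast
      ultimately show ?thesis using conjunct2[OF wf_edge_verts[OF wfK]] by simp
    qed
  qed
  have adjF'1: "\<And>j. j < k \<Longrightarrow> adj F' (p j) (p (Suc j))"
    using eF' by (auto simp: adj_def PE_def)
  have adjF'2: "\<And>j. j < k \<Longrightarrow> adj F' (p (Suc j)) (p j)"
    using adjF'1 adj_sym by metis
  have wfF': "wf_graph F'"
  proof -
    have "finite (verts F')" using wfF vF' by (simp add: wf_graph_def)
    moreover have "\<forall>e\<in>edges F'. \<exists>u v. e = {u, v} \<and> u \<noteq> v \<and> u \<in> verts F' \<and> v \<in> verts F'"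
    proof
      fix e assume "e \<in> edges F'"
      then have "e \<in> edges F \<or> e \<in> PE" using eF' by simp
      then show "\<exists>u v. e = {u, v} \<and> u \<noteq> v \<and> u \<in> verts F' \<and> v \<in> verts F'"
      proof
        assume "e \<in> edges F"
        then obtain u v where "e = {u, v}" "u \<noteq> v" "u \<in> verts F" "v \<in> verts F"
          using wfF unfolding wf_graph_def by blast
        then show ?thesis using vF' by blast
      next
        assume "e \<in> PE"
        then obtain i where "i < k" "e = {p i, p (Suc i)}" by (auto simp: PE_def)
        moreover have "p i \<in> verts F'" "p (Suc i) \<in> verts F'" using \<open>i < k\<close> vF' by auto
        ultimately show ?thesis using pne by blast
      qed
    qed
    ultimately show ?thesis by (simp add: wf_graph_def)
  qed
  have subK: "subgraph F' K"
  proof -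
    have "verts F' \<subseteq> verts K" using vF' sub pK by (auto simp: subgraph_def)
    moreover have "edges F' \<subseteq> edges K" using eF' sub ed by (auto simp: subgraph_def PE_def)
    ultimately show ?thesis using wfF' by (simp add: subgraph_def)
  qed
  have subFF': "subgraph F F'" using wfF vF' eF' by (auto simp: subgraph_def)
  have eFF': "edges F \<subseteq> edges F'" using eF' by auto
  have Fconn: "\<forall>a\<in>verts F. \<forall>b\<in>verts F. (adj F)\<^sup>*\<^sup>* a b"
    using bp by (simp add: biconn_piece_def connected_graph_def)
  have conn: "connected_graph F'"
  proof -
    have "\<forall>a\<in>verts F'. \<forall>b\<in>verts F'. (adj F')\<^sup>*\<^sup>* a b"
    proof (rule hub[where T="verts F"])
      show "verts F \<subseteq> verts F'" using vF' by auto
      show "verts F \<noteq> {}" using pu by auto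
      show "\<forall>a\<in>verts F. \<forall>b\<in>verts F. (adj F')\<^sup>*\<^sup>* a b" using Fconn rtc_mono[OF eFF'] by blast
      show "\<forall>y\<in>verts F'. \<exists>t\<in>verts F. (adj F')\<^sup>*\<^sup>* y t"
      proof
        fix y assume "y \<in> verts F'"
        then have "y \<in> verts F \<or> (\<exists>i\<le>k. y = p i)" using vF' by auto
        then show "\<exists>t\<in>verts F. (adj F')\<^sup>*\<^sup>* y t"
        proof
          assume "y \<in> verts F" then show ?thesis by blast
        next
          assume "\<exists>i\<le>k. y = p i"
          then obtain i where "i \<le> k" "y = p i" by blast
          then have "(adj F')\<^sup>*\<^sup>* y (p 0)"
            using back_path[of i "adj F'" p] adjF'2 by simp
          then show ?thesis using pu by blast
        qed
      qed
    qed
    then show ?thesis using vF' pu by (auto simp: connected_graph_def)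
  qed
  have nocut: "\<And>x. \<not> cut_vertex F' x"
  proof
    fix x assume cv: "cut_vertex F' x"
    let ?D = "del_vert F' x"
    have vD: "verts ?D = verts F' - {x}" by (simp add: del_vert_def)
    have adjD: "\<And>a b. adj ?D a b \<longleftrightarrow> adj F' a b \<and> x \<noteq> a \<and> x \<noteq> b"
      by (auto simp: adj_def del_vert_def)
    have p0k: "p 0 \<noteq> p k"
    proof
      assume "p 0 = p k"
      then have "0 = k" by (intro inj_onD[OF inj]) auto
      then show False using k by simp
    qed
    have eDD: "edges (del_vert F x) \<subseteq> edges ?D"
      using eF' by (auto simp: del_vert_def)
    have "\<forall>a\<in>verts ?D. \<forall>b\<in>verts ?D. (adj ?D)\<^sup>*\<^sup>* a b"
    proof (rule hub[where T="verts F - {x}"])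
      show "verts F - {x} \<subseteq> verts ?D" using vD vF' by auto
      show "verts F - {x} \<noteq> {}" using p0k pu pv by auto
      show "\<forall>a\<in>verts F - {x}. \<forall>b\<in>verts F - {x}. (adj ?D)\<^sup>*\<^sup>* a b"
        using del_conn[OF bp wfF] rtc_mono[OF eDD] by blast
      show "\<forall>y\<in>verts ?D. \<exists>t\<in>verts F - {x}. (adj ?D)\<^sup>*\<^sup>* y t"
      proof
        fix y assume yD: "y \<in> verts ?D"
        then have "y \<in> verts F \<or> (\<exists>i\<le>k. y = p i)" using vD vF' by auto
        then show "\<exists>t\<in>verts F - {x}. (adj ?D)\<^sup>*\<^sup>* y t"
        proof
          assume "y \<in> verts F" then show ?thesis using yD vD by blast
        next
          assume "\<exists>i\<le>k. y = p i"
          then obtain i where ik: "i \<le> k" and yi: "y = p i" by blast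
          have yx: "y \<noteq> x" using yD vD by auto
          show ?thesis
          proof (cases "x \<in> p ` {0..i}")
            case False
            have "\<forall>j<i. adj ?D (p (Suc j)) (p j)"
              using False adjF'2 adjD ik by auto
            then have "(adj ?D)\<^sup>*\<^sup>* y (p 0)" using back_path[of i "adj ?D" p] yi by simp
            moreover have "p 0 \<noteq> x" using False by auto
            ultimately show ?thesis using pu by blast
          next
            case True
            then obtain j where j: "j \<le> i" "x = p j" by auto
            have ji: "j < i" using j yi yx le_neq_implies_less by blast
            have nx: "\<And>m. i \<le> m \<Longrightarrow> m \<le> k \<Longrightarrow> p m \<noteq> x"
            proof
              fix m assume "i \<le> m" "m \<le> k" "p m = x"
              then have "p m = p j" using j by simp
              moreover have "m \<in> {0..k}" "j \<in> {0..k}" using \<open>m \<le> k\<close> j ik by auto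
              ultimately have "m = j" using inj by (meson inj_onD)
              then show False using ji \<open>i \<le> m\<close> by simp
            qed
            have "\<forall>m. i \<le> m \<and> m < k \<longrightarrow> adj ?D (p m) (p (Suc m))"
            proof (intro allI impI)
              fix m assume m: "i \<le> m \<and> m < k"
              then have "p m \<noteq> x" "p (Suc m) \<noteq> x" using nx by auto
              then show "adj ?D (p m) (p (Suc m))" using adjF'1 adjD m by auto
            qed
            then have "(adj ?D)\<^sup>*\<^sup>* y (p k)" using fwd_path[OF ik] yi by blast
            moreover have "p k \<noteq> x" using nx ik by simp
            ultimately show ?thesis using pv by blast
          qed
        qed
      qed
    qed
    then have "comps ?D \<subseteq> {verts ?D}" by (rule all_reach_comps)
    then have "card (comps ?D) \<le> card {verts ?D}" by (intro card_mono) simp_all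
    then have "card (comps ?D) \<le> 1" by simp
    moreover have "card (comps F') = 1" using connected_comps[OF conn] by simp
    ultimately show False using cv by (simp add: cut_vertex_def)
  qed
  have "biconn_piece F'" using conn nocut by (simp add: biconn_piece_def)
  then have "F' = F" by (rule mx[OF subK _ subFF'])
  then have "PE \<subseteq> edges F" using eF' by auto
  then show ?thesis unfolding PE_def by blast
qed


lemma path_fun:
  "rtrancl_path r x xs y \<Longrightarrow>
     (x # xs) ! length xs = y \<and> (\<forall>i<length xs. r ((x # xs) ! i) ((x # xs) ! Suc i))"
proof (induct rule: rtrancl_path.induct)
  case (base x) then show ?case by simp
next
  case (step x y ys z)
  have "\<forall>i<length (y # ys). r ((x # y # ys) ! i) ((x # y # ys) ! Suc i)"
  proof (intro allI impI)
    fix i assume i: "i < length (y # ys)"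
    show "r ((x # y # ys) ! i) ((x # y # ys) ! Suc i)"
    proof (cases i)
      case 0 then show ?thesis using step by simp
    next
      case (Suc j) then show ?thesis using step i by simp
    qed
  qed
  then show ?case using step by simp
qed

lemma KL:
  assumes wfK: "wf_graph K" and blk: "is_block K F" and sub: "edges G0 \<subseteq> edges K"
    and u: "u \<in> verts F" and v: "v \<in> verts F" and r: "(adj G0)\<^sup>*\<^sup>* u v"
  shows "(adj (ginter F G0))\<^sup>*\<^sup>* u v"
proof -
  obtain xs where "rtrancl_path (adj G0) u xs v" using r rtranclp_eq_rtrancl_path by metis
  then obtain ys where P: "rtrancl_path (adj G0) u ys v" and D: "distinct (u # ys)"
    using rtrancl_path_distinct by metis
  define p where "p = (\<lambda>i. (u # ys) ! i)"
  define k where "k = length ys"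
  have p0: "p 0 = u" by (simp add: p_def)
  have pk: "p k = v" and pe: "\<forall>i<k. adj G0 (p i) (p (Suc i))"
    using path_fun[OF P] by (simp_all add: p_def k_def)
  show ?thesis
  proof (cases "k = 0")
    case True then show ?thesis using p0 pk by simp
  next
    case False
    have inj: "inj_on p {0..k}"
    proof (rule inj_onI)
      fix i j assume ij: "i \<in> {0..k}" "j \<in> {0..k}" "p i = p j"
      have "\<forall>i<length (u # ys). \<forall>j<length (u # ys). i \<noteq> j \<longrightarrow> (u # ys) ! i \<noteq> (u # ys) ! j"
        using D distinct_conv_nth by blast
      moreover have "i < length (u # ys)" "j < length (u # ys)" using ij by (auto simp: k_def)
      ultimately show "i = j" using ij(3) unfolding p_def by blast
    qed
    have eK: "\<forall>i<k. {p i, p (Suc i)} \<in> edges K" using pe sub by (auto simp: adj_def)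
    have eF: "\<forall>i<k. {p i, p (Suc i)} \<in> edges F"
      using core[OF wfK blk inj _ _ _ eK] False p0 pk u v by simp
    have "\<forall>j. 0 \<le> j \<and> j < k \<longrightarrow> adj (ginter F G0) (p j) (p (Suc j))"
      using eF pe by (simp add: adj_def ginter_def)
    then have "(adj (ginter F G0))\<^sup>*\<^sup>* (p 0) (p k)" using fwd_path[of 0 k] by blast
    then show ?thesis using p0 pk by simp
  qed
qed

definition rep :: "'a set \<Rightarrow> 'a" where "rep C = (SOME v. v \<in> C)"

lemma comp_cases: "C \<in> comps A \<Longrightarrow> \<exists>w\<in>verts A. C = conn_comp A w"
  by (auto simp: comps_def)

lemma conn_self: "w \<in> verts A \<Longrightarrow> w \<in> conn_comp A w"
  by (simp add: conn_comp_def)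

lemma conn_sub: "conn_comp A w \<subseteq> verts A"
  by (auto simp: conn_comp_def)

lemma conn_eq:
  assumes "a \<in> conn_comp A w" shows "conn_comp A a = conn_comp A w"
proof -
  have wa: "(adj A)\<^sup>*\<^sup>* w a" using assms by (simp add: conn_comp_def)
  have aw: "(adj A)\<^sup>*\<^sup>* a w" using rtc_sym[OF wa] .
  show ?thesis
  proof (intro set_eqI iffI)
    fix x assume "x \<in> conn_comp A a"
    then have "x \<in> verts A" "(adj A)\<^sup>*\<^sup>* a x" by (simp_all add: conn_comp_def)
    then show "x \<in> conn_comp A w" using rtranclp_trans[OF wa] by (simp add: conn_comp_def)
  next
    fix x assume "x \<in> conn_comp A w"
    then have "x \<in> verts A" "(adj A)\<^sup>*\<^sup>* w x" by (simp_all add: conn_comp_def)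
    then show "x \<in> conn_comp A a" using rtranclp_trans[OF aw] by (simp add: conn_comp_def)
  qed
qed

lemma comp_eq_at: assumes "C \<in> comps A" "a \<in> C" shows "C = conn_comp A a"
proof -
  obtain w where "w \<in> verts A" "C = conn_comp A w" using comp_cases[OF assms(1)] by blast
  then show ?thesis using conn_eq[of a A w] assms(2) by simp
qed

lemma rep_in: assumes "C \<in> comps A" shows "rep C \<in> C"
proof -
  obtain w where "w \<in> verts A" "C = conn_comp A w" using comp_cases[OF assms] by blast
  then have "w \<in> C" using conn_self by simp
  then show ?thesis unfolding rep_def by (rule someI)
qed

lemma comp_in_verts: assumes "C \<in> comps A" shows "C \<subseteq> verts A"
proof -
  obtain w where "w \<in> verts A" "C = conn_comp A w" using comp_cases[OF assms(1)] by blast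
  then show ?thesis using conn_sub[of A w] by simp
qed

lemma conn_mono:
  assumes "edges A \<subseteq> edges B" "verts A \<subseteq> verts B"
  shows "conn_comp A a \<subseteq> conn_comp B a"
proof
  fix x assume "x \<in> conn_comp A a"
  then have "x \<in> verts A" "(adj A)\<^sup>*\<^sup>* a x" by (simp_all add: conn_comp_def)
  moreover have "(adj B)\<^sup>*\<^sup>* a x" using rtc_mono[OF assms(1)] \<open>(adj A)\<^sup>*\<^sup>* a x\<close> .
  ultimately show "x \<in> conn_comp B a" using assms(2) by (auto simp: conn_comp_def)
qed

lemma lift_eq:
  assumes "verts A \<subseteq> verts B" "edges A \<subseteq> edges B" "C \<in> comps A" "a \<in> C" "b \<in> C"
  shows "conn_comp B b = conn_comp B a"
proof -
  have "C = conn_comp A a" using comp_eq_at[OF assms(3,4)] .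
  then have "b \<in> conn_comp A a" using assms(5) by simp
  then have "b \<in> conn_comp B a" using conn_mono[OF assms(2,1)] by (rule subsetD[rotated])
  then show ?thesis by (rule conn_eq)
qed

lemma comps_in: "a \<in> verts A \<Longrightarrow> conn_comp A a \<in> comps A"
  by (simp add: comps_def)

lemma same_comp:
  assumes "C \<in> comps A" "C' \<in> comps A" "a \<in> C" "a' \<in> C'" "(adj A)\<^sup>*\<^sup>* a a'"
  shows "C = C'"
proof -
  have C: "C = conn_comp A a" using comp_eq_at[OF assms(1,3)] .
  have C': "C' = conn_comp A a'" using comp_eq_at[OF assms(2,4)] .
  have "a' \<in> verts A" using comp_in_verts[OF assms(2)] assms(4) by (rule subsetD)
  then have "a' \<in> conn_comp A a" using assms(5) by (simp add: conn_comp_def)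
  then show ?thesis using C C' conn_eq[of a' A a] by simp
qed

lemma inj_part:
  assumes wfK: "wf_graph K" and blk: "is_block K F" and sub: "edges G0 \<subseteq> edges K"
    and C: "C \<in> comps A" and C': "C' \<in> comps A"
    and vF: "verts A \<subseteq> verts F" and vG: "verts A \<subseteq> verts G0"
    and eA: "edges (ginter F G0) \<subseteq> edges A"
    and eq: "conn_comp G0 (rep C) = conn_comp G0 (rep C')"
  shows "C = C'"
proof -
  have a: "rep C \<in> C" and a': "rep C' \<in> C'" using rep_in[OF C] rep_in[OF C'] .
  have av: "rep C \<in> verts A" "rep C' \<in> verts A"
    using subsetD[OF comp_in_verts[OF C] a] subsetD[OF comp_in_verts[OF C'] a'] .
  have "rep C' \<in> conn_comp G0 (rep C')" using conn_self subsetD[OF vG av(2)] .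
  then have "rep C' \<in> conn_comp G0 (rep C)" using eq by simp
  then have "(adj G0)\<^sup>*\<^sup>* (rep C) (rep C')" by (simp add: conn_comp_def)
  then have "(adj (ginter F G0))\<^sup>*\<^sup>* (rep C) (rep C')"
    by (rule KL[OF wfK blk sub subsetD[OF vF av(1)] subsetD[OF vF av(2)]])
  then have "(adj A)\<^sup>*\<^sup>* (rep C) (rep C')" by (rule rtc_mono[OF eA])
  then show ?thesis by (rule same_comp[OF C C' a a'])
qed

lemma edge_part:
  assumes "verts A \<subseteq> verts G0" "edges A \<subseteq> edges G0" "verts B' \<subseteq> verts B"
    "verts B \<subseteq> verts G0" "edges B \<subseteq> edges G0"
    "C1 \<in> comps A" "C2 \<in> comps B'" "C2 \<subseteq> C1"
  shows "conn_comp G0 (rep C1) \<in> comps G0 \<and> conn_comp B (rep C2) \<in> comps B \<and>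
         conn_comp B (rep C2) \<subseteq> conn_comp G0 (rep C1)"
proof -
  have r1: "rep C1 \<in> C1" and r2: "rep C2 \<in> C2" using rep_in[OF assms(6)] rep_in[OF assms(7)] .
  have "rep C1 \<in> verts G0" using r1 comp_in_verts[OF assms(6)] assms(1) by auto
  moreover have "rep C2 \<in> verts B" using r2 comp_in_verts[OF assms(7)] assms(3) by auto
  moreover have "conn_comp B (rep C2) \<subseteq> conn_comp G0 (rep C2)" using conn_mono[OF assms(5,4)] .
  moreover have "conn_comp G0 (rep C2) = conn_comp G0 (rep C1)"
    using lift_eq[OF assms(1,2,6) r1] r2 assms(8) by auto
  ultimately show ?thesis using comps_in[of "rep C1" G0] comps_in[of "rep C2" B] by simp
qed

lemma vert_part: "C \<in> comps A \<Longrightarrow> verts A \<subseteq> verts G0 \<Longrightarrow> conn_comp G0 (rep C) \<in> comps G0"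
  using rep_in[of C A] comp_in_verts[of C A] comps_in[of "rep C" G0] by auto

fun lift :: "'a graph \<Rightarrow> 'a graph \<Rightarrow> 'a graph \<Rightarrow> 'a auxv \<Rightarrow> 'a auxv" where
  "lift G H B (GComp C) = GComp (conn_comp G (rep C))"
| "lift G H B (HComp C) = HComp (conn_comp H (rep C))"
| "lift G H B (BComp C) = BComp (conn_comp B (rep C))"

lemma wf_edge_sub: assumes "wf_graph F" "e \<in> edges F" shows "e \<subseteq> verts F"
proof -
  obtain u v where "e = {u, v}" "u \<in> verts F" "v \<in> verts F"
    using assms unfolding wf_graph_def by blast
  then show ?thesis by simp
qed


lemma aux_vert_cases:
  assumes "z \<in> verts (aux_sum G H S)"
  shows "(\<exists>C\<in>comps G. z = GComp C) \<or> (\<exists>C\<in>comps H. z = HComp C) \<or>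
         (\<exists>C\<in>comps (induced G S). z = BComp C)"
  using assms by (auto simp: aux_sum_def)

lemma aux_vertG: "C \<in> comps G \<Longrightarrow> GComp C \<in> verts (aux_sum G H S)"
  by (simp add: aux_sum_def)
lemma aux_vertH: "C \<in> comps H \<Longrightarrow> HComp C \<in> verts (aux_sum G H S)"
  by (simp add: aux_sum_def)
lemma aux_vertB: "C \<in> comps (induced G S) \<Longrightarrow> BComp C \<in> verts (aux_sum G H S)"
  by (simp add: aux_sum_def)

lemma aux_edge_cases:
  assumes "e \<in> edges (aux_sum G H S)"
  shows "(\<exists>C1 C2. e = {GComp C1, BComp C2} \<and> C1 \<in> comps G \<and> C2 \<in> comps (induced G S) \<and> C2 \<subseteq> C1) \<or>
         (\<exists>C1 C2. e = {HComp C1, BComp C2} \<and> C1 \<in> comps H \<and> C2 \<in> comps (induced H S) \<and> C2 \<subseteq> C1)"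
  using assms by (simp add: aux_sum_def)

lemma aux_edgeG:
  "C1 \<in> comps G \<Longrightarrow> C2 \<in> comps (induced G S) \<Longrightarrow> C2 \<subseteq> C1 \<Longrightarrow>
   {GComp C1, BComp C2} \<in> edges (aux_sum G H S)"
  by (auto simp: aux_sum_def)

lemma aux_edgeH:
  "C1 \<in> comps H \<Longrightarrow> C2 \<in> comps (induced H S) \<Longrightarrow> C2 \<subseteq> C1 \<Longrightarrow>
   {HComp C1, BComp C2} \<in> edges (aux_sum G H S)"
  by (auto simp: aux_sum_def)

theorem lemma3p6:
  fixes G H F :: "'a graph" and S :: "'a set" and lg lh :: "'a \<Rightarrow> nat" and d :: nat
  assumes "labeled_boundaried d G S lg"
    and "labeled_boundaried d H S lh"
    and "compatible G lg H lh S"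
    and "\<not> has_cycle (aux_sum G H S)"
    and "S_block (gsum G H) S F"
  shows "\<not> has_cycle (aux_sum (ginter F G) (ginter F H) (S \<inter> verts F))"
proof
  assume cyc: "has_cycle (aux_sum (ginter F G) (ginter F H) (S \<inter> verts F))"
  have wfG: "wf_graph G" and SG: "S \<subseteq> verts G" using assms(1) by (simp_all add: labeled_boundaried_def)
  have wfH: "wf_graph H" and SH: "S \<subseteq> verts H" using assms(2) by (simp_all add: labeled_boundaried_def)
  have indeq: "induced H S = induced G S" using assms(3) by (simp add: compatible_def)
  define K where "K = gsum G H"
  have vK: "verts K = verts G \<union> verts H" and eK: "edges K = edges G \<union> edges H"
    by (simp_all add: K_def gsum_def)
  have wfK: "wf_graph K"
    unfolding wf_graph_def
  proof (intro conjI ballI)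
    show "finite (verts K)" using wfG wfH vK by (simp add: wf_graph_def)
  next
    fix e assume "e \<in> edges K"
    then have "e \<in> edges G \<or> e \<in> edges H" using eK by simp
    then obtain u v where uv: "e = {u, v}" "u \<noteq> v" "u \<in> verts K" "v \<in> verts K"
    proof
      assume "e \<in> edges G"
      then obtain u v where "e = {u, v}" "u \<noteq> v" "u \<in> verts G" "v \<in> verts G"
        using wfG unfolding wf_graph_def by blast
      then show ?thesis using that vK by simp
    next
      assume "e \<in> edges H"
      then obtain u v where "e = {u, v}" "u \<noteq> v" "u \<in> verts H" "v \<in> verts H"
        using wfH unfolding wf_graph_def by blast
      then show ?thesis using that vK by simp
    qed
    show "\<exists>u v. e = {u, v} \<and> u \<noteq> v \<and> u \<in> verts K \<and> v \<in> verts K"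
      by (rule exI[of _ u], rule exI[of _ v]) (simp add: uv)
  qed
  have blk: "is_block K F" using assms(5) by (simp add: S_block_def K_def)
  have wfF: "wf_graph F" using blk by (simp add: is_block_def subgraph_def)
  define G' where "G' = ginter F G"
  define H' where "H' = ginter F H"
  define S' where "S' = S \<inter> verts F"
  define B where "B = induced G S"
  define B' where "B' = induced G' S'"
  have vG': "verts G' = verts F \<inter> verts G" and eG': "edges G' = edges F \<inter> edges G"
    by (simp_all add: G'_def ginter_def)
  have vH': "verts H' = verts F \<inter> verts H" and eH': "edges H' = edges F \<inter> edges H"
    by (simp_all add: H'_def ginter_def)
  have vB: "verts B = verts G \<inter> S" and eB: "edges B = {e \<in> edges G. e \<subseteq> S}"
    by (simp_all add: B_def induced_def)
  have vB': "verts B' = verts G' \<inter> S'" and eB': "edges B' = {e \<in> edges G'. e \<subseteq> S'}"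
    by (simp_all add: B'_def induced_def)
  have eHS: "{e \<in> edges H. e \<subseteq> S} = {e \<in> edges G. e \<subseteq> S}"
    using arg_cong[OF indeq, of edges] by (simp add: induced_def)
  have eHG: "e \<in> edges H \<longleftrightarrow> e \<in> edges G" if "e \<subseteq> S" for e
  proof -
    have "e \<in> {e \<in> edges H. e \<subseteq> S} \<longleftrightarrow> e \<in> {e \<in> edges G. e \<subseteq> S}" using eHS by simp
    then show ?thesis using that by simp
  qed
  have indeq': "induced H' S' = B'"
  proof -
    have "verts H' \<inter> S' = verts G' \<inter> S'" using SG SH vG' vH' S'_def by auto
    moreover have "{e \<in> edges H'. e \<subseteq> S'} = {e \<in> edges G'. e \<subseteq> S'}"
    proof (intro set_eqI)
      fix e
      show "e \<in> {e \<in> edges H'. e \<subseteq> S'} \<longleftrightarrow> e \<in> {e \<in> edges G'. e \<subseteq> S'}"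
      proof (cases "e \<subseteq> S'")
        case True
        then have "e \<subseteq> S" by (simp add: S'_def)
        then show ?thesis using eHG[of e] eG' eH' True by simp
      next
        case False then show ?thesis by simp
      qed
    qed
    ultimately show ?thesis by (simp add: induced_def B'_def)
  qed
  have indB: "induced H S = B" using indeq B_def by simp
  have subGK: "edges G \<subseteq> edges K" and subHK: "edges H \<subseteq> edges K" using eK by auto
  have eBG: "edges B \<subseteq> edges G" using eB by auto
  have vBG: "verts B \<subseteq> verts G" using vB by auto
  have eBH: "edges B \<subseteq> edges H" using eB eHG by auto
  have vBH: "verts B \<subseteq> verts H" using vB SG SH by auto
  have vG'G: "verts G' \<subseteq> verts G" and eG'G: "edges G' \<subseteq> edges G" using vG' eG' by auto
  have vH'H: "verts H' \<subseteq> verts H" and eH'H: "edges H' \<subseteq> edges H" using vH' eH' by auto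
  have vG'F: "verts G' \<subseteq> verts F" and vH'F: "verts H' \<subseteq> verts F" using vG' vH' by auto
  have vB'B: "verts B' \<subseteq> verts B" using vB' vB vG' S'_def by auto
  have vB'F: "verts B' \<subseteq> verts F" using vB' vG' by auto
  have eFB: "edges (ginter F B) \<subseteq> edges B'"
  proof
    fix e assume "e \<in> edges (ginter F B)"
    then have e: "e \<in> edges F" "e \<in> edges G" "e \<subseteq> S" by (simp_all add: ginter_def eB)
    have "e \<subseteq> verts F" using wf_edge_sub[OF wfF e(1)] .
    then show "e \<in> edges B'" using e by (simp add: eB' eG' S'_def)
  qed
  define f where "f = lift G H B"
  let ?A' = "aux_sum G' H' S'"
  let ?A = "aux_sum G H S"
  have GG: "conn_comp G (rep C) = conn_comp G (rep C') \<longrightarrow> C = C'"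
    if "C \<in> comps G'" "C' \<in> comps G'" for C C'
    using inj_part[OF wfK blk subGK that vG'F vG'G] G'_def by simp
  have HH: "conn_comp H (rep C) = conn_comp H (rep C') \<longrightarrow> C = C'"
    if "C \<in> comps H'" "C' \<in> comps H'" for C C'
    using inj_part[OF wfK blk subHK that vH'F vH'H] H'_def by simp
  have BB: "conn_comp B (rep C) = conn_comp B (rep C') \<longrightarrow> C = C'"
    if "C \<in> comps B'" "C' \<in> comps B'" for C C'
    using inj_part[OF wfK blk order_trans[OF eBG subGK] that vB'F vB'B eFB] by simp
  have V: "f z \<in> verts ?A" if z: "z \<in> verts ?A'" for z
  proof -
    from aux_vert_cases[OF z]
    show ?thesis
    proof (elim disjE bexE)
      fix C assume "C \<in> comps G'" "z = GComp C"
      then have "conn_comp G (rep C) \<in> comps G" using vert_part[OF _ vG'G] by blast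
      then show ?thesis using \<open>z = GComp C\<close> by (simp add: f_def aux_vertG)
    next
      fix C assume "C \<in> comps H'" "z = HComp C"
      then have "conn_comp H (rep C) \<in> comps H" using vert_part[OF _ vH'H] by blast
      then show ?thesis using \<open>z = HComp C\<close> by (simp add: f_def aux_vertH)
    next
      fix C assume "C \<in> comps (induced G' S')" "z = BComp C"
      then have "conn_comp B (rep C) \<in> comps B" using vert_part[OF _ vB'B] B'_def by blast
      then show ?thesis using \<open>z = BComp C\<close> by (simp add: f_def aux_vertB B_def)
    qed
  qed
  have E: "f ` e \<in> edges ?A" if e: "e \<in> edges ?A'" for e
  proof -
    from aux_edge_cases[OF e]
    show ?thesis
    proof (elim disjE exE conjE)
      fix C1 C2 assume h: "e = {GComp C1, BComp C2}" "C1 \<in> comps G'" "C2 \<in> comps (induced G' S')" "C2 \<subseteq> C1"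
      have "conn_comp G (rep C1) \<in> comps G \<and> conn_comp B (rep C2) \<in> comps B \<and>
         conn_comp B (rep C2) \<subseteq> conn_comp G (rep C1)"
        using edge_part[OF vG'G eG'G vB'B vBG eBG h(2)] h(3,4) B'_def by simp
      then show ?thesis using h(1) aux_edgeG[of _ G _ S H] B_def by (simp add: f_def)
    next
      fix C1 C2 assume h: "e = {HComp C1, BComp C2}" "C1 \<in> comps H'" "C2 \<in> comps (induced H' S')" "C2 \<subseteq> C1"
      have "conn_comp H (rep C1) \<in> comps H \<and> conn_comp B (rep C2) \<in> comps B \<and>
         conn_comp B (rep C2) \<subseteq> conn_comp H (rep C1)"
        using edge_part[OF vH'H eH'H vB'B vBH eBH h(2)] h(3,4) indeq' by simp
      then show ?thesis using h(1) aux_edgeH[of _ H _ S G] indB by (simp add: f_def)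
    qed
  qed
  have I: "inj_on f (verts ?A')"
  proof (rule inj_onI)
    fix z z' assume z: "z \<in> verts ?A'" and z': "z' \<in> verts ?A'" and eq: "f z = f z'"
    from aux_vert_cases[OF z] show "z = z'"
    proof (elim disjE bexE)
      fix C assume C: "C \<in> comps G'" and zC: "z = GComp C"
      from aux_vert_cases[OF z'] show "z = z'"
      proof (elim disjE bexE)
        fix C' assume C': "C' \<in> comps G'" and zC': "z' = GComp C'"
        show "z = z'" using GG[OF C C'] eq zC zC' by (simp add: f_def)
      next
        fix C' assume C': "C' \<in> comps H'" and zC': "z' = HComp C'"
        show "z = z'" using eq zC zC' by (simp add: f_def)
      next
        fix C' assume C': "C' \<in> comps (induced G' S')" and zC': "z' = BComp C'"
        show "z = z'" using eq zC zC' by (simp add: f_def)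
      qed
    next
      fix C assume C: "C \<in> comps H'" and zC: "z = HComp C"
      from aux_vert_cases[OF z'] show "z = z'"
      proof (elim disjE bexE)
        fix C' assume C': "C' \<in> comps G'" and zC': "z' = GComp C'"
        show "z = z'" using eq zC zC' by (simp add: f_def)
      next
        fix C' assume C': "C' \<in> comps H'" and zC': "z' = HComp C'"
        show "z = z'" using HH[OF C C'] eq zC zC' by (simp add: f_def)
      next
        fix C' assume C': "C' \<in> comps (induced G' S')" and zC': "z' = BComp C'"
        show "z = z'" using eq zC zC' by (simp add: f_def)
      qed
    next
      fix C assume C: "C \<in> comps (induced G' S')" and zC: "z = BComp C"
      from aux_vert_cases[OF z'] show "z = z'"
      proof (elim disjE bexE)
        fix C' assume C': "C' \<in> comps G'" and zC': "z' = GComp C'"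
        show "z = z'" using eq zC zC' by (simp add: f_def)
      next
        fix C' assume C': "C' \<in> comps H'" and zC': "z' = HComp C'"
        show "z = z'" using eq zC zC' by (simp add: f_def)
      next
        fix C' assume C': "C' \<in> comps (induced G' S')" and zC': "z' = BComp C'"
        show "z = z'" using BB[OF C[unfolded B'_def[symmetric]] C'[unfolded B'_def[symmetric]]] eq zC zC' by (simp add: f_def)
      qed
    qed
  qed
  obtain vs where vs: "length vs \<ge> 3" "distinct vs" "set vs \<subseteq> verts ?A'"
    "\<forall>i < length vs. {vs ! i, vs ! ((i + 1) mod length vs)} \<in> edges ?A'"
    using cyc unfolding has_cycle_def G'_def H'_def S'_def by blast
  have "has_cycle ?A"
    unfolding has_cycle_def
  proof (intro exI[of _ "map f vs"] conjI allI impI)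
    show "3 \<le> length (map f vs)" using vs(1) by simp
    show "distinct (map f vs)" using vs(2) inj_on_subset[OF I vs(3)] by (simp add: distinct_map)
    show "set (map f vs) \<subseteq> verts ?A" using vs(3) V by auto
  next
    fix i assume i: "i < length (map f vs)"
    let ?n = "length vs"
    have n: "?n > 0" using vs(1) by linarith
    have im: "(i + 1) mod ?n < ?n" using n by simp
    have "{vs ! i, vs ! ((i + 1) mod ?n)} \<in> edges ?A'" using vs(4) i by simp
    then have "f ` {vs ! i, vs ! ((i + 1) mod ?n)} \<in> edges ?A" by (rule E)
    then show "{map f vs ! i, map f vs ! ((i + 1) mod length (map f vs))} \<in> edges ?A"
      using i im by simp
  qed
  then show False using assms(4) by simp
qed

end
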